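(* Let $d,k,m$ be positive integers with $m>\max\{d,k\}$, let $\mathbf W\in\mathbb R^{k\times m}$ and $\mathbf V\in\mathbb R^{m\times d}$ with $\sigma_{\min}(\mathbf W)>0$ and $\sigma_{\min}(\mathbf V)>0$, and let $\boldsymbol\Sigma\in\mathbb R^{d\times d}$ be symmetric positive definite. Define $$\widehat{\mathbf G}_O=\mathbf W\mathbf W^\top\otimes\boldsymbol\Sigma+\mathbf I_k\otimes\boldsymbol\Sigma^{1/2}\mathbf V^\top\mathbf V\boldsymbol\Sigma^{1/2}\in\mathbb R^{kd\times kd}.$$ Then $\widehat{\mathbf G}_O$ is positive definite and, with $\beta_w=\sigma_{\min}^2(\mathbf W)/(\sigma_{\min}^2(\mathbf W)+\sigma_{\min}^2(\mathbf V))$, $$\kappa(\widehat{\mathbf G}_O)\le\kappa(\boldsymbol\Sigma)\cdot\frac{\sigma_{\max}^2(\mathbf W)+\sigma_{\max}^2(\mathbf V)}{\sigma_{\min}^2(\mathbf W)+\sigma_{\min}^2(\mathbf V)}=\kappa(\boldsymbol\Sigma)\big(\beta_w\,\kappa(\mathbf W)^2+(1-\beta_w)\,\kappa(\mathbf V)^2\big).$$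
   Context: $\boldsymbol\Sigma$ plays the role of the empirical input covariance $\frac1n\sum_i \mathbf x_i\mathbf x_i^\top$, and $\widehat{\mathbf G}_O$ is a matrix having the same nonzero eigenvalues as the Gauss–Newton matrix of the network $F(\mathbf x)=\mathbf W\mathbf V\mathbf x$. $\boldsymbol\Sigma^{1/2}$ is the unique positive semidefinite square root; $\otimes$ is the Kronecker product. For a symmetric positive definite matrix $\mathbf A$, $\kappa(\mathbf A)=\lambda_{\max}(\mathbf A)/\lambda_{\min}(\mathbf A)$. For a rectangular matrix $\mathbf A\in\mathbb R^{p\times q}$, $\sigma_{\max}(\mathbf A)$ is its largest singular value, $\sigma_{\min}(\mathbf A)$ is its $\min(p,q)$-th largest singular value, and $\kappa(\mathbf A)=\sigma_{\max}(\mathbf A)/\sigma_{\min}(\mathbf A)$. *)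

theory Defs
  imports "HOL-Analysis.Analysis"
begin

text \<open>Matrices are HOL-Analysis matrices: a p x q real matrix is of type real^'q^'p
  (rows indexed by 'p, columns by 'q); the dimensions are CARD('p), CARD('q).\<close>

definition symmetric_mat :: "real^'n^'n \<Rightarrow> bool" where
  "symmetric_mat A \<longleftrightarrow> transpose A = A"

definition pos_def_mat :: "real^'n^'n \<Rightarrow> bool" where
  "pos_def_mat A \<longleftrightarrow> symmetric_mat A \<and> (\<forall>x. x \<noteq> 0 \<longrightarrow> x \<bullet> (A *v x) > 0)"

definition pos_semidef_mat :: "real^'n^'n \<Rightarrow> bool" where
  "pos_semidef_mat A \<longleftrightarrow> symmetric_mat A \<and> (\<forall>x. x \<bullet> (A *v x) \<ge> 0)"

definition mat_sqrt :: "real^'n^'n \<Rightarrow> real^'n^'n" where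
  "mat_sqrt A = (THE R. pos_semidef_mat R \<and> R ** R = A)"

text \<open>Kronecker product, with index set 'a x 'b (row (i,j), column (i',j')).\<close>
definition kron :: "real^'a^'a \<Rightarrow> real^'b^'b \<Rightarrow> real^('a \<times> 'b)^('a \<times> 'b)" where
  "kron A B = (\<chi> p. \<chi> q. A $ fst p $ fst q * B $ snd p $ snd q)"

definition eigvals :: "real^'n^'n \<Rightarrow> real set" where
  "eigvals A = {l. \<exists>v. v \<noteq> 0 \<and> A *v v = l *\<^sub>R v}"

definition lambda_max :: "real^'n^'n \<Rightarrow> real" where
  "lambda_max A = Max (eigvals A)"

definition lambda_min :: "real^'n^'n \<Rightarrow> real" where
  "lambda_min A = Min (eigvals A)"

definition kappa_sym :: "real^'n^'n \<Rightarrow> real" where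
  "kappa_sym A = lambda_max A / lambda_min A"

text \<open>Singular values of a p x q matrix: sigma_max is the largest singular value,
  sigma_min the min(p,q)-th largest, i.e. the square root of the smallest eigenvalue
  of the smaller Gram matrix.\<close>
definition sigma_max :: "real^'q^'p \<Rightarrow> real" where
  "sigma_max A = sqrt (lambda_max (transpose A ** A))"

definition sigma_min :: "real^'q^'p \<Rightarrow> real" where
  "sigma_min A = (if CARD('p) \<le> CARD('q) then sqrt (lambda_min (A ** transpose A))
                  else sqrt (lambda_min (transpose A ** A)))"

definition kappa_rect :: "real^'q^'p \<Rightarrow> real" where
  "kappa_rect A = sigma_max A / sigma_min A"

end

theory Submission
  imports Defs
begin


lemma sym_inner:
  assumes "symmetric_mat A"
  shows "x \<bullet> (A *v y) = (A *v x) \<bullet> y"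
proof -
  have "x \<bullet> (A *v y) = (x v* A) \<bullet> y" by (simp add: dot_lmul_matrix)
  also have "x v* A = x v* transpose A" using assms by (simp add: symmetric_mat_def)
  also have "\<dots> = A *v x" by simp
  finally show ?thesis .
qed

lemma key_zero:
  fixes c e :: real
  assumes "\<forall>s. s > 0 \<longrightarrow> 2 * s * c + s^2 * e \<le> 0" "e \<le> 0" "c \<ge> 0"
  shows "c = 0"
proof (rule ccontr)
  assume "c \<noteq> 0" then have c: "c > 0" using assms by simp
  define D where "D = 1 - e"
  have D: "D \<ge> 1" using assms D_def by simp
  have cD: "c/D > 0" using c D by simp
  have "2*(c/D)*c + (c/D)^2*e \<le> 0" using mp[OF spec[OF assms(1), of "c/D"] cD] by simp
  then have "(2*(c/D)*c + (c/D)^2*e) * D^2 \<le> 0" using D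
    by (simp add: mult_nonpos_nonneg)
  moreover have "(2*(c/D)*c + (c/D)^2*e) * D^2 = c^2 * (2*D + e)" using D
    by (simp add: field_simps power2_eq_square)
  moreover have "c^2 * (2*D+e) > 0" using c D D_def by simp
  ultimately show False by linarith
qed

lemma sym_eig_subspace:
  fixes A :: "real^'n^'n"
  assumes symA: "symmetric_mat A" and S: "subspace S" and nz: "x1 \<in> S" "x1 \<noteq> 0"
    and inv: "\<And>x. x \<in> S \<Longrightarrow> A *v x \<in> S"
  shows "\<exists>v\<in>S. norm v = 1 \<and> (\<exists>\<mu>. A *v v = \<mu> *\<^sub>R v \<and> (\<forall>x\<in>S. x \<bullet> (A *v x) \<le> \<mu> * (x \<bullet> x)))"
proof -
  define K where "K = S \<inter> sphere 0 1"
  have cK: "compact K" unfolding K_def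
    using S by (simp add: closed_Int_compact closed_subspace)
  have "x1 /\<^sub>R norm x1 \<in> K" using nz S unfolding K_def
    by (simp add: subspace_scale)
  then have neK: "K \<noteq> {}" by auto
  have cont: "continuous_on K (\<lambda>x. x \<bullet> (A *v x))"
    by (intro continuous_intros continuous_on_id linear_continuous_on matrix_vector_mul_bounded_linear)
  obtain x0 where x0: "x0 \<in> K" and mx: "\<And>y. y \<in> K \<Longrightarrow> y \<bullet> (A *v y) \<le> x0 \<bullet> (A *v x0)"
    using continuous_attains_sup[OF cK neK cont] by blast
  define \<mu> where "\<mu> = x0 \<bullet> (A *v x0)"
  have x0S: "x0 \<in> S" and nx0: "norm x0 = 1" using x0 K_def by auto
  have x0x0: "x0 \<bullet> x0 = 1" using nx0 by (simp add: dot_square_norm)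
  have bound: "x \<bullet> (A *v x) \<le> \<mu> * (x \<bullet> x)" if "x \<in> S" for x
  proof (cases "x = 0")
    case True then show ?thesis by simp
  next
    case False
    define y where "y = x /\<^sub>R norm x"
    have "y \<in> K" using that False S unfolding K_def y_def by (simp add: subspace_scale)
    then have "y \<bullet> (A *v y) \<le> \<mu>" using mx \<mu>_def by blast
    moreover have "y \<bullet> (A *v y) = (x \<bullet> (A *v x)) / (norm x)^2"
      unfolding y_def by (simp add: matrix_vector_mult_scaleR power2_eq_square divide_inverse)
    moreover have "x \<bullet> x = (norm x)^2" by (simp add: dot_square_norm)
    ultimately show ?thesis using False
      by (simp add: divide_le_eq mult.commute)
  qed
  define w where "w = \<mu> *\<^sub>R x0 - A *v x0"
  have wS: "w \<in> S" unfolding w_def using S x0S inv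
    by (simp add: subspace_diff subspace_scale)
  define c where "c = w \<bullet> w"
  define e where "e = w \<bullet> (A *v w) - \<mu> * (w \<bullet> w)"
  have e: "e \<le> 0" using bound[OF wS] e_def by simp
  have all: "\<forall>s. s > 0 \<longrightarrow> 2 * s * c + s^2 * e \<le> 0"
  proof (intro allI impI)
    fix s :: real assume "s > 0"
    define z where "z = x0 - s *\<^sub>R w"
    have "z \<in> S" unfolding z_def using S x0S wS by (simp add: subspace_diff subspace_scale)
    then have b: "z \<bullet> (A *v z) \<le> \<mu> * (z \<bullet> z)" by (rule bound)
    have s1: "x0 \<bullet> (A *v w) = w \<bullet> (A *v x0)" using sym_inner[OF symA, of x0 w]
      by (simp add: inner_commute)
    have zA: "z \<bullet> (A *v z) = \<mu> - 2 * s * (w \<bullet> (A *v x0)) + s^2 * (w \<bullet> (A *v w))"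
      unfolding z_def \<mu>_def using s1
      by (simp add: matrix_vector_mult_diff_distrib matrix_vector_mult_scaleR inner_diff_left
          inner_diff_right power2_eq_square inner_commute algebra_simps)
    have zz: "z \<bullet> z = 1 - 2 * s * (x0 \<bullet> w) + s^2 * c"
      unfolding z_def c_def using x0x0
      by (simp add: inner_diff_left inner_diff_right power2_eq_square inner_commute algebra_simps)
    have wA: "w \<bullet> (A *v x0) = \<mu> * (x0 \<bullet> w) - c"
      unfolding c_def using w_def
      by (metis (no_types, lifting) inner_commute inner_diff_right inner_scaleR_right
          diff_diff_eq2 diff_self diff_zero w_def)
    have m: "\<mu> * (z \<bullet> z) = \<mu> - 2 * s * \<mu> * (x0 \<bullet> w) + s^2 * (\<mu> * c)"
      unfolding zz by (simp add: algebra_simps)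
    have "z \<bullet> (A *v z) = \<mu> - 2 * s * \<mu> * (x0 \<bullet> w) + 2 * s * c + s^2 * (w \<bullet> (A *v w))"
      unfolding zA wA by (simp add: algebra_simps)
    with b m have "2 * s * c + s^2 * (w \<bullet> (A *v w)) \<le> s^2 * (\<mu> * c)" by linarith
    then show "2 * s * c + s^2 * e \<le> 0" unfolding e_def c_def
      by (simp add: algebra_simps)
  qed
  have "c = 0" by (rule key_zero[OF all e]) (simp add: c_def)
  then have "w = 0" using c_def by simp
  then have "A *v x0 = \<mu> *\<^sub>R x0" using w_def by simp
  then show ?thesis using x0S nx0 bound by blast
qed



lemma mv_sum: "(A::real^'n^'m) *v (\<Sum>b\<in>B. c b *\<^sub>R b) = (\<Sum>b\<in>B. c b *\<^sub>R (A *v b))"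
  by (simp add: linear_sum[OF matrix_vector_mul_linear] matrix_vector_mult_scaleR o_def)

lemma orth_sum_inner:
  fixes B :: "(real^'n) set"
  assumes "finite B" "pairwise orthogonal B" "\<And>b. b \<in> B \<Longrightarrow> norm b = 1" "b \<in> B"
  shows "(\<Sum>b'\<in>B. c b' *\<^sub>R b') \<bullet> b = c b"
proof -
  have "(\<Sum>b'\<in>B. c b' *\<^sub>R b') \<bullet> b = (\<Sum>b'\<in>B. c b' * (b' \<bullet> b))"
    by (simp add: inner_sum_left)
  also have "\<dots> = (\<Sum>b'\<in>B. if b' = b then c b else 0)"
  proof (rule sum.cong)
    fix b' assume b': "b' \<in> B"
    show "c b' * (b' \<bullet> b) = (if b' = b then c b else 0)"
    proof (cases "b' = b")
      case True then show ?thesis using assms(3)[OF b'] by (simp add: dot_square_norm)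
    next
      case False then show ?thesis using assms(2) b' assms(4)
        by (auto simp: pairwise_def orthogonal_def)
    qed
  qed simp
  also have "\<dots> = c b" using assms(1,4) by simp
  finally show ?thesis .
qed

lemma sym_eigenbasis:
  fixes A :: "real^'n^'n"
  assumes symA: "symmetric_mat A"
  shows "\<exists>B. finite B \<and> pairwise orthogonal B \<and> (\<forall>b\<in>B. norm b = 1 \<and> (\<exists>l. A *v b = l *\<^sub>R b))
           \<and> span B = UNIV"
proof -
  define Q where "Q B \<longleftrightarrow> pairwise orthogonal B \<and> (\<forall>b\<in>B. norm b = 1 \<and> (\<exists>l. A *v b = l *\<^sub>R b))"
    for B :: "(real^'n) set"
  have Qind: "independent B \<and> finite B \<and> card B \<le> DIM(real^'n)" if "Q B" for B
  proof -
    have "0 \<notin> B" using that Q_def by force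
    then have "independent B" using that Q_def pairwise_orthogonal_independent by blast
    then show ?thesis using independent_bound by blast
  qed
  define P where "P n \<longleftrightarrow> (\<exists>B. Q B \<and> card B = n)" for n
  have "P 0" unfolding P_def Q_def by (rule exI[of _ "{}"]) simp
  moreover have "\<forall>n. P n \<longrightarrow> n \<le> DIM(real^'n)" unfolding P_def using Qind by blast
  ultimately obtain n where Pn: "P n" and nmax: "\<And>m. P m \<Longrightarrow> m \<le> n"
    using Nat.ex_has_greatest_nat[of P 0 "DIM(real^'n)"] by blast
  then obtain B where QB: "Q B" and cB: "card B = n" unfolding P_def by blast
  have fB: "finite B" using Qind[OF QB] by blast
  have orthB: "pairwise orthogonal B" and nB: "\<And>b. b \<in> B \<Longrightarrow> norm b = 1"
    and eB: "\<And>b. b \<in> B \<Longrightarrow> \<exists>l. A *v b = l *\<^sub>R b" using QB Q_def by auto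
  define S where "S = {y. \<forall>x\<in>B. orthogonal x y}"
  have subS: "subspace S" unfolding S_def by (rule subspace_orthogonal_to_vectors)
  have invS: "A *v x \<in> S" if "x \<in> S" for x
  proof -
    have "orthogonal b (A *v x)" if bB: "b \<in> B" for b
    proof -
      obtain l where l: "A *v b = l *\<^sub>R b" using eB[OF bB] by blast
      have "b \<bullet> (A *v x) = (A *v b) \<bullet> x" by (rule sym_inner[OF symA])
      also have "\<dots> = l * (b \<bullet> x)" using l by simp
      also have "\<dots> = 0" using \<open>x \<in> S\<close> \<open>b \<in> B\<close> by (simp add: S_def orthogonal_def)
      finally show ?thesis by (simp add: orthogonal_def)
    qed
    then show ?thesis unfolding S_def by blast
  qed
  have "y \<in> span B" for y
  proof -
    define r where "r = y - (\<Sum>b\<in>B. (y \<bullet> b) *\<^sub>R b)"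
    have rS: "r \<in> S" unfolding S_def orthogonal_def
    proof (intro CollectI ballI)
      fix x assume "x \<in> B"
      have "r \<bullet> x = y \<bullet> x - (\<Sum>b\<in>B. (y \<bullet> b) *\<^sub>R b) \<bullet> x" unfolding r_def by (simp add: inner_diff_left)
      also have "\<dots> = 0" using orth_sum_inner[OF fB orthB nB \<open>x \<in> B\<close>, of "\<lambda>b. y \<bullet> b"] by simp
      finally show "x \<bullet> r = 0" by (simp add: inner_commute)
    qed
    have "r = 0"
    proof (rule ccontr)
      assume "r \<noteq> 0"
      then obtain v where vS: "v \<in> S" and nv: "norm v = 1" and ev: "\<exists>l. A *v v = l *\<^sub>R v"
        using sym_eig_subspace[OF symA subS rS _ invS] by blast
      have vB: "v \<notin> B"
      proof
        assume "v \<in> B"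
        then have "v \<bullet> v = 0" using vS S_def orthogonal_def by blast
        then show False using nv by simp
      qed
      have "Q (insert v B)" unfolding Q_def
      proof (intro conjI ballI)
        show "pairwise orthogonal (insert v B)"
          using orthB vS unfolding S_def
          by (auto simp: pairwise_insert orthogonal_commute)
      qed (use nv ev nB eB in auto)
      moreover have "card (insert v B) = Suc n" using fB vB cB by simp
      ultimately have "P (Suc n)" unfolding P_def by blast
      then show False using nmax by fastforce
    qed
    then have "y = (\<Sum>b\<in>B. (y \<bullet> b) *\<^sub>R b)" unfolding r_def by simp
    also have "\<dots> \<in> span B" by (intro span_sum span_mul span_base)
    finally show ?thesis .
  qed
  then have "span B = UNIV" by auto
  then show ?thesis using fB orthB nB eB by blast
qed



lemma eig_finite:
  fixes A :: "real^'n^'n"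
  assumes symA: "symmetric_mat A"
  shows "finite (eigvals A)"
proof -
  define f where "f l = (SOME v. v \<noteq> 0 \<and> A *v v = l *\<^sub>R v)" for l
  have fp: "f l \<noteq> 0 \<and> A *v f l = l *\<^sub>R f l" if "l \<in> eigvals A" for l
  proof -
    have "\<exists>v. v \<noteq> 0 \<and> A *v v = l *\<^sub>R v" using that eigvals_def by blast
    then show ?thesis unfolding f_def by (rule someI_ex)
  qed
  have inj: "inj_on f (eigvals A)"
  proof (rule inj_onI)
    fix l l' assume l: "l \<in> eigvals A" and l': "l' \<in> eigvals A" and e: "f l = f l'"
    have "l *\<^sub>R f l = A *v f l" using fp[OF l] by simp
    also have "\<dots> = A *v f l'" using e by (rule arg_cong)
    also have "\<dots> = l' *\<^sub>R f l'" using fp[OF l'] by (rule conjunct2)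
    also have "\<dots> = l' *\<^sub>R f l" using e by simp
    finally have "l *\<^sub>R f l = l' *\<^sub>R f l" .
    moreover have "f l \<noteq> 0" using fp[OF l] by (rule conjunct1)
    ultimately show "l = l'" by (meson scaleR_cancel_right)
  qed
  have "pairwise orthogonal (f ` eigvals A)"
  unfolding pairwise_def
  proof (intro ballI impI)
    fix x y assume "x \<in> f ` eigvals A" "y \<in> f ` eigvals A" and ne: "x \<noteq> y"
    then obtain l l' where l: "l \<in> eigvals A" and l': "l' \<in> eigvals A" and xy: "x = f l" "y = f l'" by blast
    have "l \<noteq> l'" using ne xy by blast
    have "l * (f l \<bullet> f l') = (A *v f l) \<bullet> f l'" using fp[OF l] by (simp only: inner_scaleR_left)
    also have "\<dots> = f l \<bullet> (A *v f l')" by (rule sym_inner[OF symA, symmetric])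
    also have "\<dots> = l' * (f l \<bullet> f l')" using fp[OF l'] by (simp only: inner_scaleR_right)
    finally have "(l - l') * (f l \<bullet> f l') = 0" by (simp add: algebra_simps)
    then show "orthogonal x y" unfolding xy using \<open>l \<noteq> l'\<close> by (simp add: orthogonal_def)
  qed
  then have "finite (f ` eigvals A)" by (rule pairwise_orthogonal_imp_finite)
  then show ?thesis using inj finite_imageD by blast
qed

lemma exists_nz: "\<exists>x::real^'n. x \<noteq> 0"
  by (rule exI[of _ "\<chi> i. 1"]) (simp add: vec_eq_iff)

lemma sym_max:
  fixes A :: "real^'n^'n"
  assumes symA: "symmetric_mat A"
  shows "lambda_max A \<in> eigvals A \<and> (\<forall>x. x \<bullet> (A *v x) \<le> lambda_max A * (x \<bullet> x))"
proof -
  obtain x1 :: "real^'n" where x1: "x1 \<noteq> 0" using exists_nz by blast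
  obtain v \<mu> where v: "norm v = 1" "A *v v = \<mu> *\<^sub>R v" and b: "\<And>x. x \<bullet> (A *v x) \<le> \<mu> * (x \<bullet> x)"
  proof -
    have "\<exists>v\<in>UNIV. norm v = 1 \<and> (\<exists>\<mu>. A *v v = \<mu> *\<^sub>R v \<and> (\<forall>x\<in>UNIV. x \<bullet> (A *v x) \<le> \<mu> * (x \<bullet> x)))"
      by (rule sym_eig_subspace[OF symA subspace_UNIV UNIV_I x1 UNIV_I])
    then show ?thesis using that by auto
  qed
  have mu: "\<mu> \<in> eigvals A" unfolding eigvals_def using v by (auto intro!: exI[of _ v])
  have le: "l \<le> \<mu>" if lE: "l \<in> eigvals A" for l
  proof -
    obtain w where w: "w \<noteq> 0" "A *v w = l *\<^sub>R w" using lE eigvals_def by blast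
    have "l * (w \<bullet> w) \<le> \<mu> * (w \<bullet> w)" using b[of w] w by simp
    moreover have "w \<bullet> w > 0" using w by simp
    ultimately show ?thesis by simp
  qed
  have "lambda_max A = \<mu>" unfolding lambda_max_def
    by (rule Max_eqI[OF eig_finite[OF symA] le mu])
  then show ?thesis using mu b by simp
qed

lemma neg_mv: "(- A) *v x = - ((A::real^'n^'m) *v x)"
  by (simp add: matrix_vector_mult_def vec_eq_iff sum_negf)

lemma sym_neg: "symmetric_mat A \<Longrightarrow> symmetric_mat (- A)"
  unfolding symmetric_mat_def by (simp add: transpose_def vec_eq_iff)

lemma sym_min:
  fixes A :: "real^'n^'n"
  assumes symA: "symmetric_mat A"
  shows "lambda_min A \<in> eigvals A \<and> (\<forall>x. lambda_min A * (x \<bullet> x) \<le> x \<bullet> (A *v x))"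
proof -
  obtain x1 :: "real^'n" where x1: "x1 \<noteq> 0" using exists_nz by blast
  obtain v \<mu> where v: "norm v = 1" "(- A) *v v = \<mu> *\<^sub>R v" and b: "\<And>x. x \<bullet> ((- A) *v x) \<le> \<mu> * (x \<bullet> x)"
  proof -
    have "\<exists>v\<in>UNIV. norm v = 1 \<and> (\<exists>\<mu>. (- A) *v v = \<mu> *\<^sub>R v \<and> (\<forall>x\<in>UNIV. x \<bullet> ((- A) *v x) \<le> \<mu> * (x \<bullet> x)))"
      by (rule sym_eig_subspace[OF sym_neg[OF symA] subspace_UNIV UNIV_I x1 UNIV_I])
    then show ?thesis using that by auto
  qed
  have v2: "A *v v = (- \<mu>) *\<^sub>R v" using v(2) unfolding neg_mv by (metis minus_minus scaleR_minus_left)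
  have b2: "(- \<mu>) * (x \<bullet> x) \<le> x \<bullet> (A *v x)" for x using b[of x] unfolding neg_mv by simp
  have mu: "- \<mu> \<in> eigvals A" unfolding eigvals_def using v v2 by (auto intro!: exI[of _ v])
  have le: "- \<mu> \<le> l" if lE: "l \<in> eigvals A" for l
  proof -
    obtain w where w: "w \<noteq> 0" "A *v w = l *\<^sub>R w" using lE eigvals_def by blast
    have "- \<mu> * (w \<bullet> w) \<le> l * (w \<bullet> w)" using b2[of w] w by simp
    moreover have "w \<bullet> w > 0" using w by simp
    ultimately show ?thesis by (metis mult_le_cancel_right_pos)
  qed
  have "lambda_min A = - \<mu>" unfolding lambda_min_def
    by (rule Min_eqI[OF eig_finite[OF symA] le mu])
  then show ?thesis using mu b2 by simp
qed

lemma eig_upper: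
  fixes A :: "real^'n^'n"
  assumes "symmetric_mat A" "\<And>x. x \<bullet> (A *v x) \<le> C * (x \<bullet> x)"
  shows "lambda_max A \<le> C"
proof -
  obtain w where w: "w \<noteq> 0" "A *v w = lambda_max A *\<^sub>R w"
    using sym_max[OF assms(1)] eigvals_def by blast
  have "lambda_max A * (w \<bullet> w) \<le> C * (w \<bullet> w)" using assms(2)[of w] w by simp
  moreover have "w \<bullet> w > 0" using w by simp
  ultimately show ?thesis by simp
qed

lemma eig_lower:
  fixes A :: "real^'n^'n"
  assumes "symmetric_mat A" "\<And>x. C * (x \<bullet> x) \<le> x \<bullet> (A *v x)"
  shows "C \<le> lambda_min A"
proof -
  obtain w where w: "w \<noteq> 0" "A *v w = lambda_min A *\<^sub>R w"
    using sym_min[OF assms(1)] eigvals_def by blast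
  have "C * (w \<bullet> w) \<le> lambda_min A * (w \<bullet> w)" using assms(2)[of w] w by simp
  moreover have "w \<bullet> w > 0" using w by simp
  ultimately show ?thesis by simp
qed

lemma min_le_max:
  assumes "symmetric_mat A" shows "lambda_min A \<le> lambda_max A"
proof -
  have "lambda_min A \<in> eigvals A" using sym_min[OF assms] by (rule conjunct1)
  then show ?thesis unfolding lambda_max_def by (rule Max_ge[OF eig_finite[OF assms]])
qed



lemma psd_sym: "pos_semidef_mat R \<Longrightarrow> symmetric_mat R"
  unfolding pos_semidef_mat_def by blast

lemma psd_sqrt_eig:
  fixes R :: "real^'n^'n"
  assumes psd: "pos_semidef_mat R" and e: "R *v (R *v v) = l *\<^sub>R v" and l: "l \<ge> 0"
  shows "R *v v = sqrt l *\<^sub>R v"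
proof -
  have symR: "symmetric_mat R" using psd psd_sym by blast
  define s where "s = sqrt l"
  have s: "s \<ge> 0" "s * s = l" using l s_def by auto
  define u where "u = R *v v - s *\<^sub>R v"
  have Ru: "R *v u = (- s) *\<^sub>R u"
    unfolding u_def using e s
    by (simp add: matrix_vector_mult_diff_distrib matrix_vector_mult_scaleR algebra_simps)
  have "u \<bullet> (R *v u) \<ge> 0" using psd pos_semidef_mat_def by blast
  then have h: "- s * (u \<bullet> u) \<ge> 0" using Ru by simp
  show ?thesis
  proof (cases "s > 0")
    case True
    then have "u \<bullet> u \<le> 0" using h by (simp add: mult_le_0_iff)
    then have "u = 0" by (metis inner_eq_zero_iff inner_ge_zero antisym)
    then show ?thesis using u_def s_def by simp
  next
    case False
    then have s0: "s = 0" using s by simp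
    then have "l = 0" using s by simp
    then have Rv: "R *v (R *v v) = 0" using e by simp
    have "(R *v v) \<bullet> (R *v v) = v \<bullet> (R *v (R *v v))" by (rule sym_inner[OF symR, symmetric])
    also have "\<dots> = 0" using Rv by simp
    finally have "R *v v = 0" by simp
    then show ?thesis using s0 s_def by simp
  qed
qed

lemma psd_basis_ev:
  fixes A :: "real^'n^'n"
  assumes "pos_semidef_mat A"
  obtains B ev where "finite B" "pairwise orthogonal B" "\<And>b. b \<in> B \<Longrightarrow> norm b = 1"
    "\<And>b. b \<in> B \<Longrightarrow> A *v b = ev b *\<^sub>R b" "\<And>b. b \<in> B \<Longrightarrow> ev b \<ge> 0" "span B = UNIV"
proof -
  obtain B where fB: "finite B" and oB: "pairwise orthogonal B"
    and nB: "\<And>b. b \<in> B \<Longrightarrow> norm b = 1" and eB: "\<And>b. b \<in> B \<Longrightarrow> \<exists>l. A *v b = l *\<^sub>R b"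
    and sB: "span B = UNIV"
    using sym_eigenbasis[OF psd_sym[OF assms]] by blast
  define ev where "ev b = (SOME l. A *v b = l *\<^sub>R b)" for b
  have ev: "A *v b = ev b *\<^sub>R b" if "b \<in> B" for b
    unfolding ev_def using eB[OF that] by (rule someI_ex)
  have evp: "ev b \<ge> 0" if bB: "b \<in> B" for b
  proof -
    have "b \<bullet> (A *v b) \<ge> 0" using assms pos_semidef_mat_def by blast
    moreover have "b \<bullet> (A *v b) = ev b" using ev[OF bB] nB[OF bB] by (simp add: dot_square_norm)
    ultimately show ?thesis by simp
  qed
  show ?thesis using that[OF fB oB nB ev evp sB] .
qed

lemma sqrt_unique:
  fixes A R1 R2 :: "real^'n^'n"
  assumes A: "pos_semidef_mat A" and R1: "pos_semidef_mat R1" "R1 ** R1 = A"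
    and R2: "pos_semidef_mat R2" "R2 ** R2 = A"
  shows "R1 = R2"
proof -
  obtain B ev where fB: "finite B" and oB: "pairwise orthogonal B" and nB: "\<And>b. b \<in> B \<Longrightarrow> norm b = 1"
    and ev: "\<And>b. b \<in> B \<Longrightarrow> A *v b = ev b *\<^sub>R b" and evp: "\<And>b. b \<in> B \<Longrightarrow> ev b \<ge> 0"
    and sB: "span B = UNIV" using psd_basis_ev[OF A] by blast
  have agree: "R1 *v b = R2 *v b" if bB: "b \<in> B" for b
  proof -
    have "R1 *v (R1 *v b) = ev b *\<^sub>R b" using ev[OF bB] R1(2) by (simp add: matrix_vector_mul_assoc)
    then have "R1 *v b = sqrt (ev b) *\<^sub>R b" using psd_sqrt_eig[OF R1(1) _ evp[OF bB]] by blast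
    moreover have "R2 *v (R2 *v b) = ev b *\<^sub>R b" using ev[OF bB] R2(2) by (simp add: matrix_vector_mul_assoc)
    then have "R2 *v b = sqrt (ev b) *\<^sub>R b" using psd_sqrt_eig[OF R2(1) _ evp[OF bB]] by blast
    ultimately show ?thesis by simp
  qed
  have "R1 *v x = R2 *v x" for x
  proof -
    have x: "x = (\<Sum>b\<in>B. (x \<bullet> b) *\<^sub>R b)"
      using orthonormal_basis_expand[OF oB nB _ fB, of x] sB by simp
    have "R1 *v x = (\<Sum>b\<in>B. (x \<bullet> b) *\<^sub>R (R1 *v b))" by (subst x) (rule mv_sum)
    also have "\<dots> = (\<Sum>b\<in>B. (x \<bullet> b) *\<^sub>R (R2 *v b))" using agree by simp
    also have "\<dots> = R2 *v x" by (subst (2) x) (rule mv_sum[symmetric])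
    finally show ?thesis .
  qed
  then show ?thesis by (simp add: matrix_eq)
qed

lemma sqrt_exists:
  fixes A :: "real^'n^'n"
  assumes A: "pos_semidef_mat A"
  shows "\<exists>R. pos_semidef_mat R \<and> R ** R = A"
proof -
  obtain B ev where fB: "finite B" and oB: "pairwise orthogonal B" and nB: "\<And>b. b \<in> B \<Longrightarrow> norm b = 1"
    and ev: "\<And>b. b \<in> B \<Longrightarrow> A *v b = ev b *\<^sub>R b" and evp: "\<And>b. b \<in> B \<Longrightarrow> ev b \<ge> 0"
    and sB: "span B = UNIV" using psd_basis_ev[OF A] by blast
  define R :: "real^'n^'n" where "R = (\<chi> i j. \<Sum>b\<in>B. sqrt (ev b) * (b $ i * b $ j))"
  have Rx: "R *v x = (\<Sum>b\<in>B. (sqrt (ev b) * (b \<bullet> x)) *\<^sub>R b)" for x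
    unfolding R_def
    by (simp add: vec_eq_iff matrix_vector_mult_def inner_vec_def sum_distrib_left sum_distrib_right
        sum_component sum.swap[of _ B] mult_ac)
  have symR: "symmetric_mat R" unfolding symmetric_mat_def R_def
    by (simp add: transpose_def vec_eq_iff mult.commute)
  have psdR: "pos_semidef_mat R" unfolding pos_semidef_mat_def
  proof (intro conjI allI symR)
    fix x
    have "x \<bullet> (R *v x) = (\<Sum>b\<in>B. sqrt (ev b) * ((b \<bullet> x) * (b \<bullet> x)))"
      unfolding Rx by (simp add: inner_sum_right inner_commute mult_ac)
    also have "\<dots> \<ge> 0" by (rule sum_nonneg, rule mult_nonneg_nonneg) (auto simp: evp)
    finally show "x \<bullet> (R *v x) \<ge> 0" .
  qed
  have "(R ** R) *v x = A *v x" for x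
  proof -
    have inn: "(R *v x) \<bullet> b = sqrt (ev b) * (b \<bullet> x)" if "b \<in> B" for b
      unfolding Rx by (rule orth_sum_inner[OF fB oB nB that])
    have "(R ** R) *v x = R *v (R *v x)" by (simp add: matrix_vector_mul_assoc)
    also have "\<dots> = (\<Sum>b\<in>B. (sqrt (ev b) * (b \<bullet> (R *v x))) *\<^sub>R b)" by (rule Rx)
    also have "\<dots> = (\<Sum>b\<in>B. (ev b * (x \<bullet> b)) *\<^sub>R b)"
    proof (rule sum.cong[OF refl])
      fix b assume bB: "b \<in> B"
      have "sqrt (ev b) * (b \<bullet> (R *v x)) = sqrt (ev b) * sqrt (ev b) * (b \<bullet> x)"
        using inn[OF bB] by (simp add: inner_commute)
      also have "\<dots> = ev b * (x \<bullet> b)" using evp[OF bB] by (simp add: inner_commute)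
      finally show "(sqrt (ev b) * (b \<bullet> (R *v x))) *\<^sub>R b = (ev b * (x \<bullet> b)) *\<^sub>R b" by simp
    qed
    also have "\<dots> = (\<Sum>b\<in>B. (x \<bullet> b) *\<^sub>R (A *v b))"
      using ev by (intro sum.cong) (auto simp: mult.commute)
    also have "\<dots> = A *v (\<Sum>b\<in>B. (x \<bullet> b) *\<^sub>R b)" by (rule mv_sum[symmetric])
    also have "(\<Sum>b\<in>B. (x \<bullet> b) *\<^sub>R b) = x"
      using orthonormal_basis_expand[OF oB nB _ fB, of x] sB by simp
    finally show ?thesis .
  qed
  then have "R ** R = A" by (simp add: matrix_eq)
  then show ?thesis using psdR by blast
qed

lemma mat_sqrt_props:
  fixes A :: "real^'n^'n"
  assumes A: "pos_semidef_mat A"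
  shows "pos_semidef_mat (mat_sqrt A) \<and> mat_sqrt A ** mat_sqrt A = A"
proof -
  have "\<exists>!R. pos_semidef_mat R \<and> R ** R = A"
    using sqrt_exists[OF A] sqrt_unique[OF A] by blast
  then show ?thesis unfolding mat_sqrt_def by (rule theI')
qed



lemma kron_transpose: "transpose (kron A B) = kron (transpose A) (transpose B)"
  by (simp add: kron_def transpose_def vec_eq_iff)

lemma kron_sym: "symmetric_mat A \<Longrightarrow> symmetric_mat B \<Longrightarrow> symmetric_mat (kron A B)"
  unfolding symmetric_mat_def by (simp add: kron_transpose)

lemma sum_pairs: "(\<Sum>p\<in>(UNIV::('a::finite\<times>'b::finite) set). f p) = (\<Sum>i\<in>UNIV. \<Sum>j\<in>UNIV. f (i,j))"
  by (simp add: sum.cartesian_product UNIV_Times_UNIV[symmetric] del: UNIV_Times_UNIV)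

lemma kron_mult: "kron A B ** kron C D = kron (A ** C) (B ** D)"
proof -
  have "(kron A B ** kron C D) $ p $ q = kron (A ** C) (B ** D) $ p $ q" for p q
  proof -
    obtain p1 p2 q1 q2 where pq: "p = (p1,p2)" "q = (q1,q2)" by (cases p, cases q) auto
    have "(kron A B ** kron C D) $ p $ q
          = (\<Sum>i\<in>UNIV. \<Sum>j\<in>UNIV. A$p1$i * B$p2$j * (C$i$q1 * D$j$q2))"
      unfolding matrix_matrix_mult_def kron_def pq by (simp add: sum_pairs)
    also have "\<dots> = (\<Sum>i\<in>UNIV. A$p1$i * C$i$q1) * (\<Sum>j\<in>UNIV. B$p2$j * D$j$q2)"
      by (simp add: sum_product mult_ac)
    also have "\<dots> = kron (A ** C) (B ** D) $ p $ q"
      unfolding matrix_matrix_mult_def kron_def pq by simp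
    finally show ?thesis .
  qed
  then show ?thesis by (simp add: vec_eq_iff)
qed

definition sl :: "'d::finite \<Rightarrow> real^('k::finite\<times>'d) \<Rightarrow> real^'k" where "sl j x = (\<chi> i. x $ (i,j))"
definition rw :: "'k::finite \<Rightarrow> real^('k\<times>'d::finite) \<Rightarrow> real^'d" where "rw i x = (\<chi> j. x $ (i,j))"

lemma norm_sl: "x \<bullet> x = (\<Sum>j\<in>UNIV. sl j x \<bullet> sl j x)"
proof -
  have "x \<bullet> x = (\<Sum>i\<in>UNIV. \<Sum>j\<in>UNIV. x$(i,j) * x$(i,j))" unfolding inner_vec_def by (simp add: sum_pairs)
  also have "\<dots> = (\<Sum>j\<in>UNIV. \<Sum>i\<in>UNIV. x$(i,j) * x$(i,j))" by (rule sum.swap)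
  also have "\<dots> = (\<Sum>j\<in>UNIV. sl j x \<bullet> sl j x)" unfolding inner_vec_def sl_def by simp
  finally show ?thesis .
qed

lemma norm_rw: "x \<bullet> x = (\<Sum>i\<in>UNIV. rw i x \<bullet> rw i x)"
  unfolding inner_vec_def rw_def by (simp add: sum_pairs)

lemma delta1: fixes j :: "'a::finite" shows "(\<Sum>j'\<in>UNIV. (a::real) * (if j = j' then 1 else 0) * f j') = a * f j"
proof -
  have "(\<Sum>j'\<in>UNIV. a * (if j = j' then 1 else 0) * f j') = (\<Sum>j'\<in>UNIV. if j = j' then a * f j' else 0)"
    by (rule sum.cong) auto
  also have "\<dots> = a * f j" by simp
  finally show ?thesis .
qed

lemma delta2: fixes i :: "'a::finite" shows "(\<Sum>i'\<in>UNIV. (if i = i' then 1 else 0) * (a::real) * f i') = a * f i"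
proof -
  have "(\<Sum>i'\<in>UNIV. (if i = i' then 1 else 0) * a * f i') = (\<Sum>i'\<in>UNIV. if i = i' then a * f i' else 0)"
    by (rule sum.cong) auto
  also have "\<dots> = a * f i" by simp
  finally show ?thesis .
qed

lemma quad_sl: "x \<bullet> (kron P (mat 1) *v x) = (\<Sum>j\<in>UNIV. sl j x \<bullet> (P *v sl j x))"
proof -
  have "x \<bullet> (kron P (mat 1) *v x)
     = (\<Sum>i\<in>UNIV. \<Sum>j\<in>UNIV. x$(i,j) * (\<Sum>i'\<in>UNIV. \<Sum>j'\<in>UNIV. P$i$i' * (if j = j' then 1 else 0) * x$(i',j')))"
    unfolding inner_vec_def matrix_vector_mult_def kron_def mat_def by (simp add: sum_pairs)
  also have "\<dots> = (\<Sum>i\<in>UNIV. \<Sum>j\<in>UNIV. x$(i,j) * (\<Sum>i'\<in>UNIV. P$i$i' * x$(i',j)))"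
    by (simp only: delta1)
  also have "\<dots> = (\<Sum>j\<in>UNIV. \<Sum>i\<in>UNIV. x$(i,j) * (\<Sum>i'\<in>UNIV. P$i$i' * x$(i',j)))"
    by (rule sum.swap)
  also have "\<dots> = (\<Sum>j\<in>UNIV. sl j x \<bullet> (P *v sl j x))"
    unfolding inner_vec_def matrix_vector_mult_def sl_def by simp
  finally show ?thesis .
qed

lemma quad_rw: "x \<bullet> (kron (mat 1) M *v x) = (\<Sum>i\<in>UNIV. rw i x \<bullet> (M *v rw i x))"
proof -
  have "x \<bullet> (kron (mat 1) M *v x)
     = (\<Sum>i\<in>UNIV. \<Sum>j\<in>UNIV. x$(i,j) * (\<Sum>i'\<in>UNIV. \<Sum>j'\<in>UNIV. (if i = i' then 1 else 0) * M$j$j' * x$(i',j')))"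
    unfolding inner_vec_def matrix_vector_mult_def kron_def mat_def by (simp add: sum_pairs)
  also have "\<dots> = (\<Sum>i\<in>UNIV. \<Sum>j\<in>UNIV. x$(i,j) * (\<Sum>j'\<in>UNIV. \<Sum>i'\<in>UNIV. (if i = i' then 1 else 0) * M$j$j' * x$(i',j')))"
    by (subst sum.swap[of _ "UNIV::'a set"]) (rule refl)
  also have "\<dots> = (\<Sum>i\<in>UNIV. \<Sum>j\<in>UNIV. x$(i,j) * (\<Sum>j'\<in>UNIV. M$j$j' * x$(i,j')))"
    by (simp only: delta2)
  also have "\<dots> = (\<Sum>i\<in>UNIV. rw i x \<bullet> (M *v rw i x))"
    unfolding inner_vec_def matrix_vector_mult_def rw_def by simp
  finally show ?thesis .
qed



lemma kb_sl_lower: "(\<And>u. a * (u \<bullet> u) \<le> u \<bullet> (P *v u)) \<Longrightarrow> a * (x \<bullet> x) \<le> x \<bullet> (kron P (mat 1) *v x)"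
  unfolding quad_sl norm_sl[of x] sum_distrib_left by (rule sum_mono)
lemma kb_sl_upper: "(\<And>u. u \<bullet> (P *v u) \<le> a * (u \<bullet> u)) \<Longrightarrow> x \<bullet> (kron P (mat 1) *v x) \<le> a * (x \<bullet> x)"
  unfolding quad_sl norm_sl[of x] sum_distrib_left by (rule sum_mono)
lemma kb_rw_lower: "(\<And>u. a * (u \<bullet> u) \<le> u \<bullet> (M *v u)) \<Longrightarrow> a * (x \<bullet> x) \<le> x \<bullet> (kron (mat 1) M *v x)"
  unfolding quad_rw norm_rw[of x] sum_distrib_left by (rule sum_mono)
lemma kb_rw_upper: "(\<And>u. u \<bullet> (M *v u) \<le> a * (u \<bullet> u)) \<Longrightarrow> x \<bullet> (kron (mat 1) M *v x) \<le> a * (x \<bullet> x)"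
  unfolding quad_rw norm_rw[of x] sum_distrib_left by (rule sum_mono)

lemma gram_psd: "pos_semidef_mat ((A::real^'q^'p) ** transpose A)"
  unfolding pos_semidef_mat_def symmetric_mat_def
proof (intro conjI allI)
  show "transpose (A ** transpose A) = A ** transpose A" by (simp add: matrix_transpose_mul)
  fix x
  have "x \<bullet> ((A ** transpose A) *v x) = x \<bullet> (A *v (transpose A *v x))"
    by (simp add: matrix_vector_mul_assoc del: transpose_matrix_vector)
  also have "\<dots> = (x v* A) \<bullet> (transpose A *v x)" by (simp add: dot_lmul_matrix)
  also have "\<dots> = (x v* A) \<bullet> (x v* A)" by simp
  finally show "0 \<le> x \<bullet> ((A ** transpose A) *v x)" by simp
qed

lemma psd_lmin: "pos_semidef_mat A \<Longrightarrow> 0 \<le> lambda_min A"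
  using eig_lower[of A 0] psd_sym unfolding pos_semidef_mat_def by auto

lemma psd_lmax: "pos_semidef_mat A \<Longrightarrow> 0 \<le> lambda_max A"
  using psd_lmin min_le_max psd_sym by fastforce

lemma lmax_swap:
  fixes W :: "real^'m^'k"
  shows "lambda_max (W ** transpose W) \<le> lambda_max (transpose W ** W)"
proof -
  have g1: "pos_semidef_mat (W ** transpose W)" by (rule gram_psd)
  have g2: "pos_semidef_mat (transpose W ** W)" using gram_psd[of "transpose W"] by simp
  obtain v where v: "v \<noteq> 0" "(W ** transpose W) *v v = lambda_max (W ** transpose W) *\<^sub>R v"
    using sym_max[OF psd_sym[OF g1]] eigvals_def by blast
  define \<mu> where "\<mu> = lambda_max (W ** transpose W)"
  show ?thesis
  proof (cases "\<mu> \<le> 0")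
    case True then show ?thesis using psd_lmax[OF g2] \<mu>_def by simp
  next
    case False
    define u where "u = transpose W *v v"
    have Wu: "W *v u = \<mu> *\<^sub>R v" using v(2) unfolding u_def \<mu>_def by (simp add: matrix_vector_mul_assoc del: transpose_matrix_vector)
    have "u \<noteq> 0"
    proof
      assume "u = 0"
      then have "\<mu> *\<^sub>R v = 0" using Wu by simp
      then show False using False v(1) by simp
    qed
    moreover have "(transpose W ** W) *v u = \<mu> *\<^sub>R u"
    proof -
      have "(transpose W ** W) *v u = transpose W *v (W *v u)" by (simp only: matrix_vector_mul_assoc)
      also have "\<dots> = transpose W *v (\<mu> *\<^sub>R v)" by (simp only: Wu)
      also have "\<dots> = \<mu> *\<^sub>R u" unfolding u_def by (simp only: matrix_vector_mult_scaleR)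
      finally show ?thesis .
    qed
    ultimately have "\<mu> \<in> eigvals (transpose W ** W)" unfolding eigvals_def by blast
    then show ?thesis unfolding \<mu>_def lambda_max_def[of "transpose W ** W"]
      by (rule Max_ge[OF eig_finite[OF psd_sym[OF g2]]])
  qed
qed

lemma transpose_add: "transpose (A + B) = transpose A + transpose (B::real^'n^'m)"
  by (simp add: transpose_def vec_eq_iff)

lemma sym_add: "symmetric_mat A \<Longrightarrow> symmetric_mat B \<Longrightarrow> symmetric_mat (A + B)"
  unfolding symmetric_mat_def by (simp add: transpose_add)

lemma sym_mat1: "symmetric_mat (mat 1 :: real^'n^'n)"
  unfolding symmetric_mat_def by simp



theorem mainTheorem1:
  fixes W :: "real^'m^'k" and V :: "real^'d^'m" and Sigma :: "real^'d^'d"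
  assumes "CARD('m) > max CARD('d) CARD('k)"
    and "sigma_min W > 0" and "sigma_min V > 0"
    and "pos_def_mat Sigma"
  defines "G \<equiv> kron (W ** transpose W) Sigma
               + kron (mat 1 :: real^'k^'k) (mat_sqrt Sigma ** transpose V ** V ** mat_sqrt Sigma)"
    and "\<beta> \<equiv> (sigma_min W)\<^sup>2 / ((sigma_min W)\<^sup>2 + (sigma_min V)\<^sup>2)"
  shows "pos_def_mat G
    \<and> kappa_sym G \<le> kappa_sym Sigma * (((sigma_max W)\<^sup>2 + (sigma_max V)\<^sup>2)
                                          / ((sigma_min W)\<^sup>2 + (sigma_min V)\<^sup>2))
    \<and> kappa_sym Sigma * (((sigma_max W)\<^sup>2 + (sigma_max V)\<^sup>2)
                          / ((sigma_min W)\<^sup>2 + (sigma_min V)\<^sup>2))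
      = kappa_sym Sigma * (\<beta> * (kappa_rect W)\<^sup>2 + (1 - \<beta>) * (kappa_rect V)\<^sup>2)"
proof -
  define P where "P = W ** transpose W"
  define Mv where "Mv = transpose V ** V"
  define R where "R = mat_sqrt Sigma"
  define M where "M = R ** Mv ** R"
  have gP: "pos_semidef_mat P" unfolding P_def by (rule gram_psd)
  have gMv: "pos_semidef_mat Mv" unfolding Mv_def using gram_psd[of "transpose V"] by simp
  have symS: "symmetric_mat Sigma" using assms(4) pos_def_mat_def by blast
  have psdS: "pos_semidef_mat Sigma" unfolding pos_semidef_mat_def
  proof (intro conjI allI symS)
    fix x :: "real^'d" show "0 \<le> x \<bullet> (Sigma *v x)"
      using assms(4) unfolding pos_def_mat_def by (cases "x = 0") (auto intro: less_imp_le)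
  qed
  have Rp: "pos_semidef_mat R" "R ** R = Sigma" using mat_sqrt_props[OF psdS] R_def by auto
  have symR: "symmetric_mat R" using Rp psd_sym by blast
  have symP: "symmetric_mat P" and symMv: "symmetric_mat Mv" using gP gMv psd_sym by auto
  define lS where "lS = lambda_min Sigma"
  define LS where "LS = lambda_max Sigma"
  define a where "a = lambda_min P"
  define A where "A = lambda_max P"
  define c where "c = lambda_min Mv"
  define C where "C = lambda_max Mv"
  have rS: "lS * (u \<bullet> u) \<le> u \<bullet> (Sigma *v u)" "u \<bullet> (Sigma *v u) \<le> LS * (u \<bullet> u)" for u
    using sym_min[OF symS] sym_max[OF symS] lS_def LS_def by auto
  have rP: "a * (u \<bullet> u) \<le> u \<bullet> (P *v u)" "u \<bullet> (P *v u) \<le> A * (u \<bullet> u)" for u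
    using sym_min[OF symP] sym_max[OF symP] a_def A_def by auto
  have rM: "c * (u \<bullet> u) \<le> u \<bullet> (Mv *v u)" "u \<bullet> (Mv *v u) \<le> C * (u \<bullet> u)" for u
    using sym_min[OF symMv] sym_max[OF symMv] c_def C_def by auto
  have a0: "a \<ge> 0" "A \<ge> 0" using psd_lmin[OF gP] psd_lmax[OF gP] a_def A_def by auto
  have c0: "c \<ge> 0" "C \<ge> 0" using psd_lmin[OF gMv] psd_lmax[OF gMv] c_def C_def by auto
  have lS0: "lS > 0"
  proof -
    obtain w where w: "w \<noteq> 0" "Sigma *v w = lS *\<^sub>R w"
      using sym_min[OF symS] eigvals_def lS_def by blast
    have "w \<bullet> (Sigma *v w) > 0" using assms(4) w(1) unfolding pos_def_mat_def by blast
    then have "lS * (w \<bullet> w) > 0" using w(2) by simp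
    moreover have "w \<bullet> w > 0" using w by simp
    ultimately show ?thesis by (simp add: zero_less_mult_iff)
  qed
  have LS0: "lS \<le> LS" using min_le_max[OF symS] lS_def LS_def by simp
  define T where "T = kron (mat 1 :: real^'k^'k) R"
  have symT: "symmetric_mat T" unfolding T_def by (rule kron_sym[OF sym_mat1 symR])
  have KS: "kron P Sigma = T ** (kron P (mat 1) ** T)"
    unfolding T_def by (simp add: kron_mult Rp(2))
  have TT: "T ** T = kron (mat 1) Sigma" unfolding T_def by (simp add: kron_mult Rp(2))
  have t1: "a * lS * (x \<bullet> x) \<le> x \<bullet> (kron P Sigma *v x) \<and> x \<bullet> (kron P Sigma *v x) \<le> A * LS * (x \<bullet> x)" for x
  proof -
    define y where "y = T *v x"
    have e1: "x \<bullet> (kron P Sigma *v x) = y \<bullet> (kron P (mat 1) *v y)"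
      unfolding KS y_def by (simp add: matrix_vector_mul_assoc[symmetric] sym_inner[OF symT])
    have e2: "y \<bullet> y = x \<bullet> (kron (mat 1) Sigma *v x)"
      unfolding y_def TT[symmetric] by (simp add: matrix_vector_mul_assoc[symmetric] sym_inner[OF symT])
    have yl: "lS * (x \<bullet> x) \<le> y \<bullet> y" unfolding e2 by (rule kb_rw_lower[OF rS(1)])
    have yu: "y \<bullet> y \<le> LS * (x \<bullet> x)" unfolding e2 by (rule kb_rw_upper[OF rS(2)])
    have "a * (y \<bullet> y) \<le> y \<bullet> (kron P (mat 1) *v y)" by (rule kb_sl_lower[OF rP(1)])
    moreover have "a * (lS * (x \<bullet> x)) \<le> a * (y \<bullet> y)" using yl a0 by (simp add: mult_left_mono)
    moreover have "y \<bullet> (kron P (mat 1) *v y) \<le> A * (y \<bullet> y)" by (rule kb_sl_upper[OF rP(2)])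
    moreover have "A * (y \<bullet> y) \<le> A * (LS * (x \<bullet> x))" using yu a0 by (simp add: mult_left_mono)
    ultimately show ?thesis unfolding e1 by (simp add: mult.assoc)
  qed
  have MM: "mat_sqrt Sigma ** transpose V ** V ** mat_sqrt Sigma = M"
    unfolding M_def Mv_def R_def by (simp add: matrix_mul_assoc)
  have m1: "c * lS * (u \<bullet> u) \<le> u \<bullet> (M *v u) \<and> u \<bullet> (M *v u) \<le> C * LS * (u \<bullet> u)" for u
  proof -
    define z where "z = R *v u"
    have e1: "u \<bullet> (M *v u) = z \<bullet> (Mv *v z)"
      unfolding M_def z_def by (simp add: matrix_vector_mul_assoc[symmetric] sym_inner[OF symR])
    have e2: "z \<bullet> z = u \<bullet> (Sigma *v u)"
      unfolding z_def Rp(2)[symmetric] by (simp add: matrix_vector_mul_assoc[symmetric] sym_inner[OF symR])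
    have "c * (z \<bullet> z) \<le> z \<bullet> (Mv *v z)" by (rule rM(1))
    moreover have "c * (lS * (u \<bullet> u)) \<le> c * (z \<bullet> z)" using rS(1)[of u] e2 c0 by (simp add: mult_left_mono)
    moreover have "z \<bullet> (Mv *v z) \<le> C * (z \<bullet> z)" by (rule rM(2))
    moreover have "C * (z \<bullet> z) \<le> C * (LS * (u \<bullet> u))" using rS(2)[of u] e2 c0 by (simp add: mult_left_mono)
    ultimately show ?thesis unfolding e1 by (simp add: mult.assoc)
  qed
  have t2l: "c * lS * (x \<bullet> x) \<le> x \<bullet> (kron (mat 1 :: real^'k^'k) M *v x)" for x
    by (rule kb_rw_lower) (use m1 in blast)
  have t2u: "x \<bullet> (kron (mat 1 :: real^'k^'k) M *v x) \<le> C * LS * (x \<bullet> x)" for x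
    by (rule kb_rw_upper) (use m1 in blast)
  have Gx: "x \<bullet> (G *v x) = x \<bullet> (kron P Sigma *v x) + x \<bullet> (kron (mat 1 :: real^'k^'k) M *v x)" for x
    unfolding G_def MM P_def by (simp add: matrix_vector_mult_add_rdistrib inner_add_right)
  have Gl: "lS * (a + c) * (x \<bullet> x) \<le> x \<bullet> (G *v x)" for x
    using t1[of x] t2l[of x] unfolding Gx by (simp add: algebra_simps)
  have Gu: "x \<bullet> (G *v x) \<le> LS * (A + C) * (x \<bullet> x)" for x
    using t1[of x] t2u[of x] unfolding Gx by (simp add: algebra_simps)
  have symM: "symmetric_mat M" using symR symMv unfolding M_def symmetric_mat_def
    by (simp add: matrix_transpose_mul matrix_mul_assoc)
  have symG: "symmetric_mat G" unfolding G_def MM P_def[symmetric]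
    by (intro sym_add kron_sym symP symS sym_mat1 symM)
  have sW: "sigma_min W = sqrt a" using assms(1) unfolding sigma_min_def a_def P_def by simp
  have sV: "sigma_min V = sqrt c" using assms(1) unfolding sigma_min_def c_def Mv_def by simp
  have SW: "sigma_max W = sqrt (lambda_max (transpose W ** W))" unfolding sigma_max_def by simp
  have SV: "sigma_max V = sqrt C" unfolding sigma_max_def C_def Mv_def by simp
  define A' where "A' = lambda_max (transpose W ** W)"
  have AA': "A \<le> A'" unfolding A_def A'_def P_def by (rule lmax_swap)
  have apos: "a > 0" using assms(2) sW by simp
  have cpos: "c > 0" using assms(3) sV by simp
  have sW2: "(sigma_min W)\<^sup>2 = a" and sV2: "(sigma_min V)\<^sup>2 = c" using sW sV a0 c0 by auto
  have SW2: "(sigma_max W)\<^sup>2 = A'" and SV2: "(sigma_max V)\<^sup>2 = C" using SW SV a0 c0 AA' A'_def by auto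
  have pd: "pos_def_mat G" unfolding pos_def_mat_def
  proof (intro conjI allI impI symG)
    fix x :: "real^('k\<times>'d)" assume "x \<noteq> 0"
    then have "x \<bullet> x > 0" by simp
    moreover have "lS * (a + c) > 0" using lS0 apos cpos by simp
    ultimately have "lS * (a + c) * (x \<bullet> x) > 0" by simp
    then show "x \<bullet> (G *v x) > 0" using Gl[of x] by linarith
  qed
  have hi: "lambda_max G \<le> LS * (A + C)" by (rule eig_upper[OF symG Gu])
  have lo: "lS * (a + c) \<le> lambda_min G" by (rule eig_lower[OF symG Gl])
  have lopos: "lS * (a + c) > 0" using lS0 apos cpos by simp
  have mm: "lambda_min G \<le> lambda_max G" by (rule min_le_max[OF symG])
  have "kappa_sym G = lambda_max G / lambda_min G" unfolding kappa_sym_def ..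
  also have "\<dots> \<le> (LS * (A' + C)) / lambda_min G"
    using hi AA' lopos lo LS0 lS0
    by (intro divide_right_mono) (auto intro: order_trans mult_left_mono)
  also have "\<dots> \<le> (LS * (A' + C)) / (lS * (a + c))"
    using lo lopos LS0 lS0 AA' a0 c0
    by (intro divide_left_mono mult_nonneg_nonneg) auto
  also have "\<dots> = kappa_sym Sigma * ((A' + C) / (a + c))"
    unfolding kappa_sym_def lS_def[symmetric] LS_def[symmetric] by simp
  finally have k: "kappa_sym G \<le> kappa_sym Sigma * ((A' + C) / (a + c))" .
  have eq: "(A' + C) / (a + c) = \<beta> * (kappa_rect W)\<^sup>2 + (1 - \<beta>) * (kappa_rect V)\<^sup>2"
  proof -
    have ac: "a + c > 0" using apos cpos by simp
    have b1: "1 - a / (a + c) = c / (a + c)" using ac by (simp add: field_simps)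
    have x1: "a / (a + c) * (A' / a) = A' / (a + c)" using apos ac by simp
    have x2: "c / (a + c) * (C / c) = C / (a + c)" using cpos ac by simp
    show ?thesis
      unfolding \<beta>_def kappa_rect_def power_divide sW2 sV2 SW2 SV2 b1 x1 x2
      by (simp add: add_divide_distrib)
  qed
  show ?thesis using pd k eq unfolding sW2 sV2 SW2 SV2 by simp
qed

end
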